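(* There is an absolute constant $C>0$ such that the following holds. Let $\varepsilon>0$, let $f:\mathbb R\to\mathbb R$ be $1$-smooth, and let $x_-<x_+$ satisfy $f'(x_-)\le-\varepsilon$ and $f(x_+)\ge f(x_-)$. Then BinarySearchIII$(x_-,x_+)$ terminates and outputs an $\varepsilon$-stationary point of $f$ using at most $C\bigl(1+\max\{0,\log\frac{x_+-x_-}{\varepsilon}\}\bigr)$ oracle queries.
   Context: $f:\mathbb R\to\mathbb R$ is $1$-smooth if it is continuously differentiable and $f'$ is $1$-Lipschitz; $x$ is an $\varepsilon$-stationary point if $|f'(x)|<\varepsilon$. The oracle returns $(f(x),f'(x))$ on query $x$; values at already-queried points (including $x_\pm$) are reused. Subroutines (a recursive call's output is returned unchanged): BinarySearch$(x_0,x_1)$: $m=(x_0+x_1)/2$; if $|f'(m)|<\varepsilon$ return $m$; if $f'(m)\le-\varepsilon$ return BinarySearch$(m,x_1)$; if $f'(m)>0$ return BinarySearch$(x_0,m)$. BinarySearchIII$(x_-,x_+)$: $m=(x_-+x_+)/2$; if $|f'(m)|<\varepsilon$ return $m$; else if $f'(m)>0$ return BinarySearch$(x_-,m)$; else if $f(m)\ge f(x_-)$ return BinarySearchIII$(x_-,m)$; else return BinarySearchIII$(m,x_+)$. *)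

theory Defs
  imports Complex_Main
begin

definition one_smooth :: "(real \<Rightarrow> real) \<Rightarrow> (real \<Rightarrow> real) \<Rightarrow> bool" where
  "one_smooth f f' \<longleftrightarrow> (\<forall>x. (f has_real_derivative f' x) (at x)) \<and>
     (\<forall>x y. \<bar>f' x - f' y\<bar> \<le> \<bar>x - y\<bar>)"

text \<open>bsearch f' eps x0 x1 r k: BinarySearch(x0,x1) terminates, returns r, and
  makes k oracle queries (one per midpoint evaluated).\<close>
inductive bsearch :: "(real \<Rightarrow> real) \<Rightarrow> real \<Rightarrow> real \<Rightarrow> real \<Rightarrow> real \<Rightarrow> nat \<Rightarrow> bool"
  for f' :: "real \<Rightarrow> real" and eps :: real where
  bs_found: "m = (x0 + x1) / 2 \<Longrightarrow> \<bar>f' m\<bar> < eps \<Longrightarrow> bsearch f' eps x0 x1 m 1"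
| bs_right: "m = (x0 + x1) / 2 \<Longrightarrow> \<not> \<bar>f' m\<bar> < eps \<Longrightarrow> f' m \<le> - eps \<Longrightarrow>
    bsearch f' eps m x1 r k \<Longrightarrow> bsearch f' eps x0 x1 r (Suc k)"
| bs_left: "m = (x0 + x1) / 2 \<Longrightarrow> \<not> \<bar>f' m\<bar> < eps \<Longrightarrow> \<not> f' m \<le> - eps \<Longrightarrow> f' m > 0 \<Longrightarrow>
    bsearch f' eps x0 m r k \<Longrightarrow> bsearch f' eps x0 x1 r (Suc k)"

text \<open>bsearch3 f f' eps xm xp r k: BinarySearchIII(xm,xp) terminates, returns r,
  with k oracle queries in total (including those of the nested BinarySearch).\<close>
inductive bsearch3 :: "(real \<Rightarrow> real) \<Rightarrow> (real \<Rightarrow> real) \<Rightarrow> real \<Rightarrow> real \<Rightarrow> real \<Rightarrow> real \<Rightarrow> nat \<Rightarrow> bool"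
  for f :: "real \<Rightarrow> real" and f' :: "real \<Rightarrow> real" and eps :: real where
  bs3_found: "m = (xm + xp) / 2 \<Longrightarrow> \<bar>f' m\<bar> < eps \<Longrightarrow> bsearch3 f f' eps xm xp m 1"
| bs3_bs: "m = (xm + xp) / 2 \<Longrightarrow> \<not> \<bar>f' m\<bar> < eps \<Longrightarrow> f' m > 0 \<Longrightarrow>
    bsearch f' eps xm m r k \<Longrightarrow> bsearch3 f f' eps xm xp r (Suc k)"
| bs3_left: "m = (xm + xp) / 2 \<Longrightarrow> \<not> \<bar>f' m\<bar> < eps \<Longrightarrow> \<not> f' m > 0 \<Longrightarrow> f m \<ge> f xm \<Longrightarrow>
    bsearch3 f f' eps xm m r k \<Longrightarrow> bsearch3 f f' eps xm xp r (Suc k)"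
| bs3_right: "m = (xm + xp) / 2 \<Longrightarrow> \<not> \<bar>f' m\<bar> < eps \<Longrightarrow> \<not> f' m > 0 \<Longrightarrow> \<not> f m \<ge> f xm \<Longrightarrow>
    bsearch3 f f' eps m xp r k \<Longrightarrow> bsearch3 f f' eps xm xp r (Suc k)"

end

theory Submission
  imports Defs
begin

lemma lip: "one_smooth f f' \<Longrightarrow> \<bar>f' x - f' y\<bar> \<le> \<bar>x - y\<bar>"
  unfolding one_smooth_def by blast

lemma lenA:
  assumes "one_smooth f f'" "x0 < x1" "f' x0 \<le> - eps" "f' x1 \<ge> eps"
  shows "x1 - x0 \<ge> 2 * eps"
  using lip[OF assms(1), of x1 x0] assms by linarith

lemma lenB:
  assumes "one_smooth f f'" "eps > 0" "xm < xp" "f' xm \<le> - eps" "f xp \<ge> f xm"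
  shows "xp - xm \<ge> 2 * eps"
proof -
  define g where "g x = f x - f xm + eps * (x - xm) - (x - xm)^2 / 2" for x
  have d: "(f has_real_derivative f' x) (at x)" for x
    using assms(1) unfolding one_smooth_def by blast
  have "g xm \<ge> g xp"
  proof (rule DERIV_nonpos_imp_nonincreasing[of xm xp g])
    show "xm \<le> xp" using assms by simp
    fix x assume x: "xm \<le> x" "x \<le> xp"
    have "(g has_real_derivative f' x + eps - (x - xm)) (at x)"
      unfolding g_def[abs_def]
      by (auto intro!: derivative_eq_intros d simp: field_simps)
    moreover have "f' x + eps - (x - xm) \<le> 0"
      using lip[OF assms(1), of x xm] x assms(4) by linarith
    ultimately show "\<exists>y. DERIV g x :> y \<and> y \<le> 0" by blast
  qed
  hence "0 \<le> - eps * (xp - xm) + (xp - xm)^2 / 2"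
    using assms(5) unfolding g_def by simp
  moreover have "- eps * (xp - xm) + (xp - xm)^2 / 2 = (xp - xm) * ((xp - xm) - 2 * eps) / 2"
    by (simp add: power2_eq_square field_simps)
  ultimately have "0 \<le> (xp - xm) * ((xp - xm) - 2 * eps)" by linarith
  moreover have "xp - xm > 0" using assms by simp
  ultimately show ?thesis
    by (simp add: zero_le_mult_iff)
qed

lemma bs_exists:
  assumes sm: "one_smooth f f'" and e: "eps > 0"
  shows "\<forall>x0 x1. x0 < x1 \<and> f' x0 \<le> - eps \<and> f' x1 \<ge> eps \<and> x1 - x0 \<le> 2 * eps * 2^n \<longrightarrow>
     (\<exists>r k. bsearch f' eps x0 x1 r k \<and> \<bar>f' r\<bar> < eps \<and> k \<le> n + 1)"
proof (induction n)
  case 0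
  show ?case
  proof (intro allI impI)
    fix x0 x1 assume a: "x0 < x1 \<and> f' x0 \<le> - eps \<and> f' x1 \<ge> eps \<and> x1 - x0 \<le> 2 * eps * 2^0"
    define m where "m = (x0 + x1) / 2"
    have mx: "m - x0 = (x1 - x0)/2" "x1 - m = (x1 - x0)/2" unfolding m_def by (simp_all add: field_simps)
    have "\<bar>f' m\<bar> < eps"
    proof (rule ccontr)
      assume n: "\<not> \<bar>f' m\<bar> < eps"
      show False
      proof (cases "f' m \<le> - eps")
        case True
        have "m < x1" "f' x1 \<ge> eps" using a mx by auto
        hence "x1 - m \<ge> 2 * eps" using lenA[OF sm, of m x1 eps] True by blast
        thus False using a e mx by auto
      next
        case False
        have "x0 < m" "f' x0 \<le> - eps" "f' m \<ge> eps" using a m_def False n by auto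
        hence "m - x0 \<ge> 2 * eps" using lenA[OF sm, of x0 m eps] by blast
        thus False using a e mx by auto
      qed
    qed
    thus "\<exists>r k. bsearch f' eps x0 x1 r k \<and> \<bar>f' r\<bar> < eps \<and> k \<le> 0 + 1"
      using bs_found[where f'=f' and eps=eps, OF m_def] by auto
  qed
next
  case (Suc n)
  show ?case
  proof (intro allI impI)
    fix x0 x1 assume a: "x0 < x1 \<and> f' x0 \<le> - eps \<and> f' x1 \<ge> eps \<and> x1 - x0 \<le> 2 * eps * 2^Suc n"
    define m where "m = (x0 + x1) / 2"
    have mx: "m - x0 = (x1 - x0)/2" "x1 - m = (x1 - x0)/2" unfolding m_def by (simp_all add: field_simps)
    show "\<exists>r k. bsearch f' eps x0 x1 r k \<and> \<bar>f' r\<bar> < eps \<and> k \<le> Suc n + 1"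
    proof (cases "\<bar>f' m\<bar> < eps")
      case True
      thus ?thesis using bs_found[where f'=f' and eps=eps, OF m_def] by auto
    next
      case n: False
      show ?thesis
      proof (cases "f' m \<le> - eps")
        case True
        have "m < x1 \<and> f' m \<le> - eps \<and> f' x1 \<ge> eps \<and> x1 - m \<le> 2 * eps * 2^n"
          using a True mx by auto
        then obtain r k where "bsearch f' eps m x1 r k" "\<bar>f' r\<bar> < eps" "k \<le> n + 1"
          using Suc.IH by blast
        thus ?thesis using bs_right[where f'=f' and eps=eps, OF m_def n True] by fastforce
      next
        case False
        have p: "f' m > 0" using n False by linarith
        have "x0 < m \<and> f' x0 \<le> - eps \<and> f' m \<ge> eps \<and> m - x0 \<le> 2 * eps * 2^n"
          using a n False mx by auto
        then obtain r k where "bsearch f' eps x0 m r k" "\<bar>f' r\<bar> < eps" "k \<le> n + 1"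
          using Suc.IH by blast
        thus ?thesis using bs_left[where f'=f' and eps=eps, OF m_def n False p] by fastforce
      qed
    qed
  qed
qed

lemma bs3_exists:
  assumes sm: "one_smooth f f'" and e: "eps > 0"
  shows "\<forall>x0 x1. x0 < x1 \<and> f' x0 \<le> - eps \<and> f x1 \<ge> f x0 \<and> x1 - x0 \<le> 2 * eps * 2^n \<longrightarrow>
     (\<exists>r k. bsearch3 f f' eps x0 x1 r k \<and> \<bar>f' r\<bar> < eps \<and> k \<le> n + 1)"
proof (induction n)
  case 0
  show ?case
  proof (intro allI impI)
    fix x0 x1 assume a: "x0 < x1 \<and> f' x0 \<le> - eps \<and> f x1 \<ge> f x0 \<and> x1 - x0 \<le> 2 * eps * 2^0"
    define m where "m = (x0 + x1) / 2"
    have mx: "m - x0 = (x1 - x0)/2" "x1 - m = (x1 - x0)/2" unfolding m_def by (simp_all add: field_simps)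
    have "\<bar>f' m\<bar> < eps"
    proof (rule ccontr)
      assume n: "\<not> \<bar>f' m\<bar> < eps"
      show False
      proof (cases "f' m > 0")
        case True
        have "x0 < m" "f' x0 \<le> - eps" "f' m \<ge> eps" using a m_def True n by auto
        hence "m - x0 \<ge> 2 * eps" using lenA[OF sm, of x0 m eps] by blast
        thus False using a e mx by auto
      next
        case False
        hence fm: "f' m \<le> - eps" using n by linarith
        show False
        proof (cases "f m \<ge> f x0")
          case True
          have "x0 < m" using a mx by linarith
          hence "m - x0 \<ge> 2 * eps" using lenB[OF sm e, of x0 m] True a by blast
          thus False using a e mx by auto
        next
          case False
          have "m < x1" "f x1 \<ge> f m" using a mx False by auto
          hence "x1 - m \<ge> 2 * eps" using lenB[OF sm e, of m x1] fm by blast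
          thus False using a e mx by auto
        qed
      qed
    qed
    thus "\<exists>r k. bsearch3 f f' eps x0 x1 r k \<and> \<bar>f' r\<bar> < eps \<and> k \<le> 0 + 1"
      using bs3_found[where f=f and f'=f' and eps=eps, OF m_def] by auto
  qed
next
  case (Suc n)
  show ?case
  proof (intro allI impI)
    fix x0 x1 assume a: "x0 < x1 \<and> f' x0 \<le> - eps \<and> f x1 \<ge> f x0 \<and> x1 - x0 \<le> 2 * eps * 2^Suc n"
    define m where "m = (x0 + x1) / 2"
    have mx: "m - x0 = (x1 - x0)/2" "x1 - m = (x1 - x0)/2" unfolding m_def by (simp_all add: field_simps)
    show "\<exists>r k. bsearch3 f f' eps x0 x1 r k \<and> \<bar>f' r\<bar> < eps \<and> k \<le> Suc n + 1"
    proof (cases "\<bar>f' m\<bar> < eps")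
      case True
      thus ?thesis using bs3_found[where f=f and f'=f' and eps=eps, OF m_def] by auto
    next
      case n: False
      show ?thesis
      proof (cases "f' m > 0")
        case True
        have "x0 < m \<and> f' x0 \<le> - eps \<and> f' m \<ge> eps \<and> m - x0 \<le> 2 * eps * 2^n"
          using a n True mx by auto
        then obtain r k where "bsearch f' eps x0 m r k" "\<bar>f' r\<bar> < eps" "k \<le> n + 1"
          using bs_exists[OF sm e, of n] by blast
        thus ?thesis using bs3_bs[where f=f and f'=f' and eps=eps, OF m_def n True] by fastforce
      next
        case False
        hence fm: "f' m \<le> - eps" using n by linarith
        show ?thesis
        proof (cases "f m \<ge> f x0")
          case True
          have "x0 < m \<and> f' x0 \<le> - eps \<and> f m \<ge> f x0 \<and> m - x0 \<le> 2 * eps * 2^n"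
            using a True mx by auto
          then obtain r k where "bsearch3 f f' eps x0 m r k" "\<bar>f' r\<bar> < eps" "k \<le> n + 1"
            using Suc.IH by blast
          thus ?thesis using bs3_left[where f=f and f'=f' and eps=eps, OF m_def n False True] by fastforce
        next
          case F2: False
          have "m < x1 \<and> f' m \<le> - eps \<and> f x1 \<ge> f m \<and> x1 - m \<le> 2 * eps * 2^n"
            using a F2 fm mx by auto
          then obtain r k where "bsearch3 f f' eps m x1 r k" "\<bar>f' r\<bar> < eps" "k \<le> n + 1"
            using Suc.IH by blast
          thus ?thesis using bs3_right[where f=f and f'=f' and eps=eps, OF m_def n False F2] by fastforce
        qed
      qed
    qed
  qed
qed

lemma ln2_ge: "ln (2::real) \<ge> 1/2"
  using ln_le_minus_one[of "1/2::real"] by (simp add: ln_div)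

theorem lemmaA5:
  "\<exists>C::real. C > 0 \<and>
    (\<forall>(eps::real) (f::real \<Rightarrow> real) f' (xm::real) (xp::real).
       eps > 0 \<longrightarrow> one_smooth f f' \<longrightarrow> xm < xp \<longrightarrow> f' xm \<le> - eps \<longrightarrow> f xp \<ge> f xm \<longrightarrow>
       (\<exists>r k. bsearch3 f f' eps xm xp r k \<and> \<bar>f' r\<bar> < eps \<and>
              real k \<le> C * (1 + max 0 (ln ((xp - xm) / eps)))))"
proof (rule exI[of _ "2::real"], rule conjI, simp, intro allI impI)
  fix eps :: real and f f' :: "real \<Rightarrow> real" and xm xp :: real
  assume e: "eps > 0" and sm: "one_smooth f f'" and a: "xm < xp" "f' xm \<le> - eps" "f xp \<ge> f xm"
  define M where "M = max 0 (ln ((xp - xm) / eps))"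
  define n where "n = nat \<lceil>2 * M\<rceil>"
  have M0: "M \<ge> 0" unfolding M_def by simp
  have n1: "real n \<le> 2 * M + 1" unfolding n_def using M0 by linarith
  have n2: "real n \<ge> 2 * M" unfolding n_def by linarith
  have "(xp - xm) / eps = exp (ln ((xp - xm) / eps))" using a e by simp
  also have "\<dots> \<le> exp M" unfolding M_def by simp
  also have "\<dots> \<le> exp (real n * ln 2)"
  proof -
    have "real n * (1/2) \<le> real n * ln 2" using ln2_ge by (intro mult_left_mono) auto
    thus ?thesis using n2 by simp
  qed
  also have "\<dots> = 2 ^ n" by (simp add: exp_of_nat_mult)
  finally have "xp - xm \<le> eps * 2^n" using e by (simp add: divide_le_eq mult.commute)
  moreover have "eps * 2^n \<ge> 0" using e by simp
  ultimately have "xp - xm \<le> 2 * eps * 2^n" by linarith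
  then obtain r k where R: "bsearch3 f f' eps xm xp r k" "\<bar>f' r\<bar> < eps" "k \<le> n + 1"
    using bs3_exists[OF sm e, of n] a by blast
  have "real k \<le> real n + 1" using \<open>k \<le> n + 1\<close> by simp
  hence "real k \<le> 2 * (1 + M)" using n1 M0 by (simp add: algebra_simps)
  with R show "\<exists>r k. bsearch3 f f' eps xm xp r k \<and> \<bar>f' r\<bar> < eps \<and>
              real k \<le> 2 * (1 + max 0 (ln ((xp - xm) / eps)))"
    unfolding M_def by blast
qed

end
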